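(* Let $n\ge 5$ be odd and let $x,y$ be adjacent vertices of $Q_n$ with $f_n(x)+f_n(y)=\operatorname{str}_{f_n}(Q_n)$. If $x$ and $y$ both begin with the bit $1$, then $$\operatorname{str}_{f_n}(Q_n)\le \operatorname{str}_{f_{n-2}}(Q_{n-2})+3\cdot 2^{n-2}+\binom{n-3}{\lceil (n-3)/2\rceil}+\binom{n-2}{\lceil (n-2)/2\rceil}.$$
   Context: $Q_n$ is the $n$-dimensional hypercube: vertices are the $n$-bit strings, adjacent iff they differ in exactly one position. For a bijection $f:V(G)\to\{1,\dots,|V(G)|\}$, $\operatorname{str}_f(G)=\max\{f(u)+f(v):uv\in E(G)\}$. An $n$-bit string is $x_1\cdots x_n$, $x_i\in\{0,1\}$; its weight is its number of $1$s. Lexicographic order: $x<y$ if for some $k$, $x_j=y_j$ for $j<k$ and $x_k<y_k$. $S_n^i$ is the sequence of $n$-bit strings of weight $i$ in increasing lexicographic order; $R_n^i$ is the same set in decreasing lexicographic order. $S_n$ is the concatenation $(R_n^1,R_n^3,\dots,R_n^{n-1},S_n^n,S_n^{n-2},\dots,S_n^2,S_n^0)$ for even $n$ and $(R_n^1,R_n^3,\dots,R_n^{n-2},R_n^n,S_n^{n-1},\dots,S_n^2,S_n^0)$ for odd $n$; $f_n$ maps the string in position $j$ of $S_n$ to $j$. *)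

theory Defs
  imports Main "HOL-Library.List_Lexorder"
begin

text \<open>n-bit strings are represented as bool lists of length n (False = 0, True = 1).
  The order on bool lists from List_Lexorder is the lexicographic order
  (False < True), which on equal-length lists is exactly the paper's order.\<close>

definition bitstrings :: "nat \<Rightarrow> bool list set" where
  "bitstrings n = {x. length x = n}"

definition weight :: "bool list \<Rightarrow> nat" where
  "weight x = count_list x True"

definition hc_adj :: "nat \<Rightarrow> bool list \<Rightarrow> bool list \<Rightarrow> bool" where
  "hc_adj n x y \<longleftrightarrow> length x = n \<and> length y = n \<and> card {i. i < n \<and> x ! i \<noteq> y ! i} = 1"

definition Sseq :: "nat \<Rightarrow> nat \<Rightarrow> bool list list" where
  "Sseq n i = sorted_list_of_set {x. length x = n \<and> weight x = i}"

definition Rseq :: "nat \<Rightarrow> nat \<Rightarrow> bool list list" where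
  "Rseq n i = rev (Sseq n i)"

text \<open>S_n: first R_n^i for odd i increasing (1,3,...), then S_n^i for even i
  decreasing (..., 2, 0). This covers both the even and odd case of the paper.\<close>
definition Sn :: "nat \<Rightarrow> bool list list" where
  "Sn n = concat (map (Rseq n) (filter odd [0..<Suc n]))
        @ concat (map (Sseq n) (rev (filter even [0..<Suc n])))"

definition fn :: "nat \<Rightarrow> bool list \<Rightarrow> nat" where
  "fn n x = Suc (LEAST j. j < length (Sn n) \<and> Sn n ! j = x)"

definition str_fn :: "nat \<Rightarrow> nat" where
  "str_fn n = Max {fn n u + fn n v | u v. hc_adj n u v}"

end

theory Submission
  imports Defs "HOL.Binomial_Plus"
begin


definition A :: "nat \<Rightarrow> nat \<Rightarrow> bool list set" where
  "A m w = {y. length y = m \<and> weight y = w}"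

lemma weight_simps[simp]: "weight [] = 0" "weight (True#z) = Suc (weight z)" "weight (False#z) = weight z"
  by (simp_all add: weight_def)

lemma A_0: "A 0 w = (if w = 0 then {[]} else {})"
  by (auto simp: A_def)

lemma A_Suc_0: "A (Suc m) 0 = Cons False ` A m 0"
  apply (auto simp: A_def length_Suc_conv)
  subgoal for y ys by (cases y) auto
  done

lemma A_Suc_Suc: "A (Suc m) (Suc w) = Cons False ` A m (Suc w) \<union> Cons True ` A m w"
  apply (auto simp: A_def length_Suc_conv)
  subgoal for y ys by (cases y) auto
  done

lemma finite_A: "finite (A m w)"
proof -
  have "A m w \<subseteq> {y. set y \<subseteq> UNIV \<and> length y = m}" by (auto simp: A_def)
  moreover have "finite {y::bool list. set y \<subseteq> UNIV \<and> length y = m}"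
    by (rule finite_lists_length_eq) simp
  ultimately show ?thesis by (rule finite_subset)
qed

lemma card_A: "card (A m w) = m choose w"
proof (induction m arbitrary: w)
  case 0 then show ?case by (simp add: A_0)
next
  case (Suc m)
  show ?case
  proof (cases w)
    case 0 then show ?thesis using Suc by (simp add: A_Suc_0 card_image)
  next
    case (Suc w')
    have "card (A (Suc m) (Suc w')) = card (Cons False ` A m (Suc w')) + card (Cons True ` A m w')"
      unfolding A_Suc_Suc by (rule card_Un_disjoint) (auto intro: finite_A finite_subset[OF _ finite_A])
    then show ?thesis using Suc \<open>\<And>w. card (A m w) = m choose w\<close> by (simp add: card_image)
  qed
qed

fun rk :: "bool list \<Rightarrow> nat" where
  "rk [] = 0"
| "rk (False#z) = rk z"
| "rk (True#z) = (length z choose Suc (weight z)) + rk z"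

lemma rk_card: "card {y \<in> A (length z) (weight z). y < z} = rk z"
proof (induction z)
  case Nil then show ?case by simp
next
  case (Cons b z)
  show ?case
  proof (cases b)
    case False
    have "{y \<in> A (length (b#z)) (weight (b#z)). y < b#z} = Cons False ` {y \<in> A (length z) (weight z). y < z}"
      using False by (auto simp: A_def length_Suc_conv)
    then show ?thesis using Cons False by (simp add: card_image)
  next
    case True
    have "{y \<in> A (length (b#z)) (weight (b#z)). y < b#z} = Cons False ` A (length z) (Suc (weight z)) \<union> Cons True ` {y \<in> A (length z) (weight z). y < z}"
      using True apply (auto simp: A_def length_Suc_conv)
      subgoal for y ys by (cases y) auto
      done
    moreover have "card (Cons False ` A (length z) (Suc (weight z)) \<union> Cons True ` {y \<in> A (length z) (weight z). y < z})
       = card (Cons False ` A (length z) (Suc (weight z))) + card (Cons True ` {y \<in> A (length z) (weight z). y < z})"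
      by (rule card_Un_disjoint) (auto intro: finite_A finite_subset[OF _ finite_A])
    ultimately show ?thesis using Cons True by (simp add: card_image card_A)
  qed
qed

lemma rk_less: "rk z < length z choose weight z"
proof -
  have "{y \<in> A (length z) (weight z). y < z} \<subset> A (length z) (weight z)"
    by (auto simp: A_def)
  then have "card {y \<in> A (length z) (weight z). y < z} < card (A (length z) (weight z))"
    by (rule psubset_card_mono[OF finite_A])
  then show ?thesis by (simp add: rk_card card_A)
qed

lemma sl_nth:
  fixes S :: "'a::linorder set"
  assumes "finite S" "z \<in> S"
  shows "sorted_list_of_set S ! card {y\<in>S. y < z} = z"
proof -
  define xs where "xs = sorted_list_of_set S"
  have sw: "sorted_wrt (<) xs" and st: "set xs = S" and dx: "distinct xs"
    using assms by (auto simp: xs_def strict_sorted_list_of_set)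
  obtain j where j: "j < length xs" "xs ! j = z" using assms st by (metis in_set_conv_nth)
  have "{y\<in>S. y < z} = set (take j xs)"
  proof safe
    fix y assume "y \<in> S" "y < z"
    then obtain l where l: "l < length xs" "xs ! l = y" using st by (metis in_set_conv_nth)
    have "l < j"
    proof (rule ccontr)
      assume "\<not> l < j"
      then have "j \<le> l" by simp
      then have "xs ! j \<le> xs ! l" using sw l(1)
        by (metis le_less sorted_wrt_nth_less)
      then show False using l j \<open>y < z\<close> by simp
    qed
    then show "y \<in> set (take j xs)" using l j by (metis in_set_conv_nth length_take min_less_iff_conj nth_take)
  next
    fix y assume "y \<in> set (take j xs)"
    then obtain l where l: "l < j" "xs ! l = y" using j by (auto simp: in_set_conv_nth)
    then show "y \<in> S" using j st by auto
    show "y < z" using l j sw sorted_wrt_nth_less by blast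
  qed
  then have "card {y\<in>S. y < z} = j" using dx j by (simp add: distinct_card)
  then show ?thesis using j by (simp add: xs_def)
qed



definition P :: "nat \<Rightarrow> nat \<Rightarrow> nat" where "P m t = (\<Sum>l<t. m choose l)"

lemma P_0[simp]: "P m 0 = 0" by (simp add: P_def)
lemma P_Suc: "P m (Suc t) = P m t + (m choose t)" by (simp add: P_def)

lemma P_full: "Suc m \<le> t \<Longrightarrow> P m t = 2 ^ m"
proof (induction t rule: dec_induct)
  case base
  then show ?case by (simp add: P_def lessThan_Suc_atMost choose_row_sum)
next
  case (step t) then show ?case by (simp add: P_Suc)
qed

lemma P_Suc_Suc: "P (Suc q) (Suc t) = P q (Suc t) + P q t"
  by (induction t) (simp_all add: P_Suc)

definition Od :: "nat \<Rightarrow> nat \<Rightarrow> nat" where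
  "Od n i = sum_list (map (\<lambda>j. n choose j) (filter odd [0..<i]))"
definition Ev :: "nat \<Rightarrow> nat \<Rightarrow> nat" where
  "Ev n i = sum_list (map (\<lambda>j. n choose j) (filter even [0..<i]))"

lemma Od_eq: "Od (Suc n) i = P n (2 * (i div 2))"
proof (induction i)
  case 0 then show ?case by (simp add: Od_def)
next
  case (Suc i)
  have "Od (Suc n) (Suc i) = Od (Suc n) i + (if odd i then Suc n choose i else 0)"
    by (simp add: Od_def)
  then show ?case
  proof (cases "odd i")
    case True
    then obtain i' where i': "i = Suc (2*i')" by (metis oddE Suc_eq_plus1 add.commute)
    then show ?thesis using Suc \<open>Od (Suc n) (Suc i) = _\<close> by (simp add: P_Suc)
  next
    case False
    then show ?thesis using Suc \<open>Od (Suc n) (Suc i) = _\<close> by simp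
  qed
qed

lemma Ev_eq: "Ev (Suc n) i = P n (if odd i then i else i - 1)"
proof (induction i)
  case 0 then show ?case by (simp add: Ev_def)
next
  case (Suc i)
  have "Ev (Suc n) (Suc i) = Ev (Suc n) i + (if even i then Suc n choose i else 0)"
    by (simp add: Ev_def)
  then show ?case
  proof (cases "even i")
    case True
    show ?thesis
    proof (cases i)
      case 0 then show ?thesis using Suc \<open>Ev (Suc n) (Suc i) = _\<close> by (simp add: P_Suc)
    next
      case (Suc i')
      then show ?thesis using Suc.IH True \<open>Ev (Suc n) (Suc i) = _\<close> by (simp add: P_Suc)
    qed
  next
    case False
    then show ?thesis using Suc \<open>Ev (Suc n) (Suc i) = _\<close> by simp
  qed
qed

lemma set_Sseq: "set (Sseq n i) = A n i"
  unfolding Sseq_def A_def[symmetric] using finite_A by simp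
lemma length_Sseq: "length (Sseq n i) = n choose i"
  unfolding Sseq_def A_def[symmetric] using finite_A by (simp add: card_A)
lemma distinct_Sseq: "distinct (Sseq n i)"
  unfolding Sseq_def by simp
lemma Sseq_nth: "length z = n \<Longrightarrow> Sseq n (weight z) ! rk z = z"
  unfolding Sseq_def A_def[symmetric] rk_card[symmetric]
  using sl_nth[OF finite_A, of z n "weight z"] by (simp add: A_def)
lemma Rseq_nth: "length z = n \<Longrightarrow> Rseq n (weight z) ! ((n choose weight z) - 1 - rk z) = z"
proof -
  assume l: "length z = n"
  have "rk z < n choose weight z" using rk_less[of z] l by simp
  then show ?thesis using l unfolding Rseq_def
    by (simp add: rev_nth length_Sseq Sseq_nth Suc_diff_Suc)
qed

lemma idx_lemma:
  assumes "r < length xs" "xs ! r = z" "distinct xs" "z \<notin> set ys"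
  shows "(LEAST j. j < length (ys@xs@zs) \<and> (ys@xs@zs)!j = z) = length ys + r"
proof (rule Least_equality)
  show "length ys + r < length (ys @ xs @ zs) \<and> (ys @ xs @ zs) ! (length ys + r) = z"
    using assms by (simp add: nth_append)
next
  fix j assume j: "j < length (ys @ xs @ zs) \<and> (ys @ xs @ zs) ! j = z"
  show "length ys + r \<le> j"
  proof (rule ccontr)
    assume "\<not> length ys + r \<le> j"
    then have jl: "j < length ys + r" by simp
    show False
    proof (cases "j < length ys")
      case True
      then have "z \<in> set ys" using j by (metis nth_append nth_mem)
      then show False using assms by simp
    next
      case False
      then have "xs ! (j - length ys) = z" "j - length ys < r" using j jl assms(1)
        by (auto simp: nth_append)
      moreover have "j - length ys < length xs" using \<open>j - length ys < r\<close> assms(1) by simp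
      ultimately have "j - length ys = r" using nth_eq_iff_index_eq[OF assms(3)] assms(1,2) by metis
      then show False using \<open>j - length ys < r\<close> by simp
    qed
  qed
qed



lemma weight_le: "weight z \<le> length z"
proof (induction z)
  case (Cons b z) then show ?case by (cases b) auto
qed simp

lemma set_Rseq: "set (Rseq n i) = A n i"
  by (simp add: Rseq_def set_Sseq)
lemma length_Rseq: "length (Rseq n i) = n choose i"
  by (simp add: Rseq_def length_Sseq)

lemma fn_odd:
  assumes "odd n" "length z = n" "odd (weight z)"
  shows "fn n z = P (n-1) (weight z - 1) + (n choose weight z) - rk z"
proof -
  define i where "i = weight z"
  have iln: "i \<le> n" using weight_le[of z] assms by (simp add: i_def)
  have up: "[0..<Suc n] = [0..<i] @ i # [Suc i..<Suc n]"
  proof -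
    have "[0..<Suc n] = [0..<i] @ [i..<Suc n]" using upt_add_eq_append[of 0 i "Suc n - i"] iln by simp
    moreover have "[i..<Suc n] = i # [Suc i..<Suc n]" using iln by (simp add: upt_conv_Cons)
    ultimately show ?thesis by simp
  qed
  define ys where "ys = concat (map (Rseq n) (filter odd [0..<i]))"
  define zs where "zs = concat (map (Rseq n) (filter odd [Suc i..<Suc n])) @ concat (map (Sseq n) (rev (filter even [0..<Suc n])))"
  have Sn_eq: "Sn n = ys @ Rseq n i @ zs"
    unfolding Sn_def ys_def zs_def up using assms(3) by (simp add: i_def)
  have rkl: "rk z < n choose i" using rk_less[of z] assms by (simp add: i_def)
  have "z \<notin> set ys"
    unfolding ys_def by (auto simp: set_Rseq A_def i_def)
  then have "(LEAST j. j < length (Sn n) \<and> Sn n ! j = z) = length ys + ((n choose i) - 1 - rk z)"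
    unfolding Sn_eq
    by (intro idx_lemma) (use rkl Rseq_nth[OF assms(2)] in \<open>simp_all add: length_Rseq length_Sseq i_def Rseq_def distinct_Sseq\<close>)
  moreover have "length ys = Od n i"
    unfolding ys_def Od_def length_concat by (simp add: length_Rseq o_def)
  moreover obtain n' where n': "n = Suc n'" using assms(1) by (cases n) auto
  moreover have "2 * (i div 2) = i - 1" using assms(3) unfolding i_def by presburger
  ultimately show ?thesis using rkl unfolding fn_def by (simp add: Od_eq i_def)
qed

lemma fn_even:
  assumes "odd n" "length z = n" "even (weight z)"
  shows "fn n z + P (n-1) (Suc (weight z)) = 2 ^ n + 1 + rk z"
proof -
  define k where "k = weight z"
  have kln: "k \<le> n" using weight_le[of z] assms by (simp add: k_def)
  have up: "[0..<Suc n] = [0..<k] @ k # [Suc k..<Suc n]"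
  proof -
    have "[0..<Suc n] = [0..<k] @ [k..<Suc n]" using upt_add_eq_append[of 0 k "Suc n - k"] kln by simp
    moreover have "[k..<Suc n] = k # [Suc k..<Suc n]" using kln by (simp add: upt_conv_Cons)
    ultimately show ?thesis by simp
  qed
  define ys where "ys = concat (map (Rseq n) (filter odd [0..<Suc n])) @ concat (map (Sseq n) (rev (filter even [Suc k..<Suc n])))"
  define zs where "zs = concat (map (Sseq n) (rev (filter even [0..<k])))"
  have Sn_eq: "Sn n = ys @ Sseq n k @ zs"
    unfolding Sn_def ys_def zs_def
    apply (subst (2) up) using assms(3) by (simp add: k_def)
  have rkl: "rk z < n choose k" using rk_less[of z] assms by (simp add: k_def)
  have "z \<notin> set ys"
    unfolding ys_def using assms(3) by (auto simp: set_Rseq set_Sseq A_def k_def)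
  then have "(LEAST j. j < length (Sn n) \<and> Sn n ! j = z) = length ys + rk z"
    unfolding Sn_eq
    by (intro idx_lemma) (use rkl Sseq_nth[OF assms(2)] in \<open>simp_all add: length_Sseq k_def distinct_Sseq\<close>)
  moreover have "length ys = Od n (Suc n) + sum_list (map (\<lambda>j. n choose j) (filter even [Suc k..<Suc n]))"
    unfolding ys_def Od_def by (simp add: length_concat length_Rseq length_Sseq o_def rev_map[symmetric] sum_list_rev)
  moreover have "Ev n (Suc n) = Ev n (Suc k) + sum_list (map (\<lambda>j. n choose j) (filter even [Suc k..<Suc n]))"
    unfolding Ev_def up using assms(3)
    by (simp add: k_def upt_Suc)
  moreover obtain n' where n': "n = Suc n'" using assms(1) by (cases n) auto
  ultimately show ?thesis using assms unfolding fn_def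
    by (simp add: Od_eq Ev_eq k_def P_full)
qed



lemma weight_upd_flip: "(if xs!p then Suc (weight (xs[p := \<not> xs!p])) = weight xs else weight (xs[p := \<not> xs!p]) = Suc (weight xs))" if "p < length xs"
  using that
proof (induction xs arbitrary: p)
  case Nil then show ?case by simp
next
  case (Cons c xs)
  show ?case
  proof (cases p)
    case 0 then show ?thesis by (cases c) auto
  next
    case (Suc p') then show ?thesis using Cons.IH[of p'] Cons.prems by (cases c) auto
  qed
qed

lemma fn_TT_odd:
  assumes "odd (Suc q)" "length a = Suc q" "odd (weight a)"
  shows "fn (Suc (Suc (Suc q))) (True#True#a) + rk a = P (Suc (Suc q)) (Suc (weight a)) + (Suc q choose weight a)"
proof -
  have "fn (Suc (Suc (Suc q))) (True#True#a) = P (Suc (Suc q)) (Suc (weight a)) + (Suc (Suc (Suc q)) choose Suc (Suc (weight a))) - rk (True#True#a)"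
    using fn_odd[of "Suc (Suc (Suc q))" "True#True#a"] assms by simp
  moreover have "rk (True#True#a) = (Suc (Suc q) choose Suc (Suc (weight a))) + (Suc q choose Suc (weight a)) + rk a"
    using assms by simp
  moreover have "rk (True#True#a) < (Suc (Suc (Suc q)) choose Suc (Suc (weight a)))"
    using rk_less[of "True#True#a"] assms by simp
  ultimately show ?thesis using assms by simp
qed

lemma fn_TT_even:
  assumes "odd (Suc q)" "length a = Suc q" "even (weight a)"
  shows "fn (Suc (Suc (Suc q))) (True#True#a) + P (Suc (Suc q)) (Suc (Suc (Suc (weight a))))
     = 2 ^ Suc (Suc (Suc q)) + 1 + (Suc (Suc q) choose Suc (Suc (weight a))) + (Suc q choose Suc (weight a)) + rk a"
  using fn_even[of "Suc (Suc (Suc q))" "True#True#a"] assms by simp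

lemma fn_TF_odd:
  assumes "odd (Suc q)" "length a = Suc q" "even (weight a)"
  shows "fn (Suc (Suc (Suc q))) (True#False#a) + rk a = P (Suc (Suc q)) (Suc (weight a))"
proof -
  have "fn (Suc (Suc (Suc q))) (True#False#a) = P (Suc (Suc q)) (weight a) + (Suc (Suc (Suc q)) choose Suc (weight a)) - rk (True#False#a)"
    using fn_odd[of "Suc (Suc (Suc q))" "True#False#a"] assms by simp
  moreover have "rk (True#False#a) = (Suc (Suc q) choose Suc (weight a)) + rk a"
    using assms by simp
  moreover have "rk (True#False#a) < (Suc (Suc (Suc q)) choose Suc (weight a))"
    using rk_less[of "True#False#a"] assms by simp
  ultimately show ?thesis using assms by (simp add: P_Suc)
qed

lemma fn_TF_even:
  assumes "odd (Suc q)" "length a = Suc q" "odd (weight a)"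
  shows "fn (Suc (Suc (Suc q))) (True#False#a) + P (Suc (Suc q)) (Suc (Suc (weight a)))
     = 2 ^ Suc (Suc (Suc q)) + 1 + (Suc (Suc q) choose Suc (weight a)) + rk a"
  using fn_even[of "Suc (Suc (Suc q))" "True#False#a"] assms by simp

lemma fn_base_odd:
  assumes "odd (Suc q)" "length a = Suc q" "odd (weight a)"
  shows "fn (Suc q) a + rk a = P q (weight a - 1) + (Suc q choose weight a)"
  using fn_odd[of "Suc q" a] assms rk_less[of a] by simp

lemma fn_base_even:
  assumes "odd (Suc q)" "length a = Suc q" "even (weight a)"
  shows "fn (Suc q) a + P q (Suc (weight a)) = 2 ^ Suc q + 1 + rk a"
  using fn_even[of "Suc q" a] assms by simp

definition flip0 :: "bool list \<Rightarrow> bool list" where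
  "flip0 z = (case z of [] \<Rightarrow> [] | c#z' \<Rightarrow> (\<not>c)#z')"

lemma fn_flip_even:
  assumes "odd (Suc q)" "length a = Suc q" "even (weight a)"
  shows "fn (Suc q) (flip0 a) + rk a = P q (Suc (weight a))"
proof -
  obtain c a' where a: "a = c#a'" using assms(2) by (cases a) auto
  have la': "length a' = q" using a assms by simp
  show ?thesis
  proof (cases c)
    case False
    have "fn (Suc q) (True#a') = P q (weight (True#a') - 1) + (Suc q choose weight (True#a')) - rk (True#a')"
      using fn_odd[of "Suc q" "True#a'"] assms a False by simp
    moreover have "rk (True#a') < (Suc q choose weight (True#a'))" using rk_less[of "True#a'"] la' by simp
    ultimately show ?thesis using a False la' by (simp add: flip0_def P_Suc)
  next
    case True
    then obtain j where j: "weight a' = Suc j" using assms a by (cases "weight a'") auto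
    have "fn (Suc q) (False#a') = P q (weight (False#a') - 1) + (Suc q choose weight (False#a')) - rk (False#a')"
      using fn_odd[of "Suc q" "False#a'"] assms a True by simp
    moreover have "rk (False#a') < (Suc q choose weight (False#a'))" using rk_less[of "False#a'"] la' by simp
    ultimately show ?thesis using a True la' j by (simp add: flip0_def P_Suc)
  qed
qed

lemma fn_flip_odd:
  assumes "odd (Suc q)" "length a = Suc q" "odd (weight a)"
  shows "fn (Suc q) (flip0 a) + P q (Suc (weight a)) = 2 ^ Suc q + 1 + rk a"
proof -
  obtain c a' where a: "a = c#a'" using assms(2) by (cases a) auto
  have la': "length a' = q" using a assms by simp
  show ?thesis
  proof (cases c)
    case False
    have "fn (Suc q) (True#a') + P q (Suc (weight (True#a'))) = 2 ^ Suc q + 1 + rk (True#a')"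
      using fn_even[of "Suc q" "True#a'"] assms a False by simp
    then show ?thesis using a False la' by (simp add: flip0_def P_Suc)
  next
    case True
    have "fn (Suc q) (False#a') + P q (Suc (weight (False#a'))) = 2 ^ Suc q + 1 + rk (False#a')"
      using fn_even[of "Suc q" "False#a'"] assms a True by simp
    then show ?thesis using a True la' by (simp add: flip0_def P_Suc)
  qed
qed



lemma P2: "P (Suc (Suc q)) (Suc (Suc t)) = 4 * P q t + 3 * (q choose t) + (q choose Suc t)"
  unfolding P_Suc_Suc by (simp add: P_Suc)

lemma cen1: "even q \<Longrightarrow> q choose t \<le> q choose ((q+1) div 2)"
  using binomial_maximum[of q t] by (metis even_succ_div_two)

lemma cen2: "even q \<Longrightarrow> Suc q choose t \<le> Suc q choose ((Suc q+1) div 2)"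
proof -
  assume e: "even q"
  have "Suc q choose t \<le> Suc q choose (Suc q div 2)" by (rule binomial_maximum)
  also have "Suc q choose (Suc q div 2) = Suc q choose (Suc q - Suc q div 2)"
    by (rule binomial_symmetric) simp
  also have "Suc q - Suc q div 2 = (Suc q + 1) div 2" using e by (elim evenE) simp
  finally show ?thesis .
qed

lemma core11:
  assumes "odd (Suc q)" "length a = Suc q" "length b = Suc q" "odd (weight a)"
    and "weight b = Suc (weight a) \<or> Suc (weight b) = weight a"
  shows "fn (Suc (Suc (Suc q))) (True#True#a) + fn (Suc (Suc (Suc q))) (True#True#b)
    \<le> fn (Suc q) a + fn (Suc q) b + (3 * 2 ^ Suc q + (q choose ((q+1) div 2)) + (Suc q choose ((Suc q+1) div 2)))"
proof -
  have eq: "even q" using assms(1) by simp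
  obtain j where w: "weight a = Suc j" using assms(4) by (cases "weight a") auto
  have e1: "fn (Suc (Suc (Suc q))) (True#True#a) + rk a = P (Suc (Suc q)) (Suc (Suc j)) + (Suc q choose Suc j)"
    using fn_TT_odd[OF assms(1,2,4)] w by simp
  have e3: "fn (Suc q) a + rk a = P q j + (Suc q choose Suc j)"
    using fn_base_odd[OF assms(1,2,4)] w by simp
  from assms(5) show ?thesis
  proof
    assume v: "weight b = Suc (weight a)"
    have ev: "even (weight b)" using v assms(4) by simp
    have e2: "fn (Suc (Suc (Suc q))) (True#True#b) + P (Suc (Suc q)) (Suc (Suc (Suc (Suc (Suc j)))))
     = 2 ^ Suc (Suc (Suc q)) + 1 + (Suc (Suc q) choose Suc (Suc (Suc (Suc j)))) + (Suc q choose Suc (Suc (Suc j))) + rk b"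
      using fn_TT_even[OF assms(1,3) ev] v w by simp
    have e4: "fn (Suc q) b + P q (Suc (Suc (Suc j))) = 2 ^ Suc q + 1 + rk b"
      using fn_base_even[OF assms(1,3) ev] v w by simp
    show ?thesis using e1 e2 e3 e4 by (simp add: P2 P_Suc)
  next
    assume v: "Suc (weight b) = weight a"
    have ev: "even (weight b)" using assms(4) unfolding v[symmetric] by simp
    have vj: "weight b = j" using v w by simp
    have e2: "fn (Suc (Suc (Suc q))) (True#True#b) + P (Suc (Suc q)) (Suc (Suc (Suc j)))
     = 2 ^ Suc (Suc (Suc q)) + 1 + (Suc (Suc q) choose Suc (Suc j)) + (Suc q choose Suc j) + rk b"
      using fn_TT_even[OF assms(1,3) ev] vj by simp
    have e4: "fn (Suc q) b + P q (Suc j) = 2 ^ Suc q + 1 + rk b"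
      using fn_base_even[OF assms(1,3) ev] vj by simp
    have c1: "q choose j \<le> q choose ((q+1) div 2)" using cen1[OF eq] .
    have c2: "Suc q choose Suc j \<le> Suc q choose ((Suc q+1) div 2)" using cen2[OF eq] .
    show ?thesis using e1 e2 e3 e4 c1 c2 by (simp add: P2 P_Suc)
  qed
qed

lemma core10:
  assumes "odd (Suc q)" "length a = Suc q" "length b = Suc q" "even (weight a)"
    and "weight b = Suc (weight a) \<or> Suc (weight b) = weight a"
  shows "fn (Suc (Suc (Suc q))) (True#False#a) + fn (Suc (Suc (Suc q))) (True#False#b)
    \<le> fn (Suc q) (flip0 a) + fn (Suc q) (flip0 b) + (3 * 2 ^ Suc q + (q choose ((q+1) div 2)) + (Suc q choose ((Suc q+1) div 2)))"
proof -
  have eq: "even q" using assms(1) by simp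
  have ob: "odd (weight b)" using assms(4,5) by (metis even_Suc)
  have e1: "fn (Suc (Suc (Suc q))) (True#False#a) + rk a = P (Suc (Suc q)) (Suc (weight a))"
    using fn_TF_odd[OF assms(1,2,4)] .
  have e2: "fn (Suc (Suc (Suc q))) (True#False#b) + P (Suc (Suc q)) (Suc (Suc (weight b)))
     = 2 ^ Suc (Suc (Suc q)) + 1 + (Suc (Suc q) choose Suc (weight b)) + rk b"
    using fn_TF_even[OF assms(1,3) ob] .
  have e3: "fn (Suc q) (flip0 a) + rk a = P q (Suc (weight a))"
    using fn_flip_even[OF assms(1,2,4)] .
  have e4: "fn (Suc q) (flip0 b) + P q (Suc (weight b)) = 2 ^ Suc q + 1 + rk b"
    using fn_flip_odd[OF assms(1,3) ob] .
  from assms(5) show ?thesis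
  proof
    assume v: "weight b = Suc (weight a)"
    show ?thesis
    proof (cases "weight a")
      case 0
      then show ?thesis using e1 e2 e3 e4 v by (simp add: P2 P_Suc)
    next
      case (Suc j)
      then obtain j' where j': "weight a = Suc (Suc j')" using assms(4) by (cases j) auto
      then show ?thesis using e1 e2 e3 e4 v by (simp add: P2 P_Suc)
    qed
  next
    assume v: "Suc (weight b) = weight a"
    have c1: "q choose weight b \<le> q choose ((q+1) div 2)" using cen1[OF eq] .
    have c2: "Suc q choose weight b \<le> Suc q choose ((Suc q+1) div 2)" using cen2[OF eq] .
    show ?thesis using e1 e2 e3 e4 v[symmetric] c1 c2 by (simp add: P2 P_Suc)
  qed
qed

lemma corec:
  assumes "odd (Suc q)" "length a = Suc q"
  shows "fn (Suc (Suc (Suc q))) (True#True#a) + fn (Suc (Suc (Suc q))) (True#False#a)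
    \<le> 2 ^ Suc q + 1 + (3 * 2 ^ Suc q + (q choose ((q+1) div 2)) + (Suc q choose ((Suc q+1) div 2)))"
proof (cases "odd (weight a)")
  case True
  note e1 = fn_TT_odd[OF assms True]
  note e2 = fn_TF_even[OF assms True]
  have c2: "Suc q choose weight a \<le> Suc q choose ((Suc q+1) div 2)" using cen2 assms(1) by simp
  show ?thesis using e1 e2 c2 by (simp add: P_Suc)
next
  case False
  then have ev: "even (weight a)" by simp
  note e1 = fn_TT_even[OF assms ev]
  note e2 = fn_TF_odd[OF assms ev]
  show ?thesis using e1 e2 by (simp add: P_Suc)
qed



lemma hc_adj_iff: "hc_adj n x y \<longleftrightarrow> length x = n \<and> (\<exists>p<n. y = x[p := \<not> x!p])"
proof
  assume h: "hc_adj n x y"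
  then have lx: "length x = n" and ly: "length y = n" and c: "card {i. i < n \<and> x ! i \<noteq> y ! i} = 1"
    by (auto simp: hc_adj_def)
  from c obtain p where pe: "{i. i < n \<and> x ! i \<noteq> y ! i} = {p}" by (metis card_1_singletonE)
  then have p: "p < n" "x!p \<noteq> y!p" by auto
  have "y = x[p := \<not> x!p]"
  proof (rule nth_equalityI)
    show "length y = length (x[p := \<not> x ! p])" using lx ly by simp
    fix i assume "i < length y"
    then show "y ! i = x[p := \<not> x ! p] ! i" using pe p lx ly
      by (cases "i = p") auto
  qed
  then show "length x = n \<and> (\<exists>p<n. y = x[p := \<not> x!p])" using lx p by blast
next
  assume "length x = n \<and> (\<exists>p<n. y = x[p := \<not> x!p])"
  then obtain p where lx: "length x = n" and p: "p < n" and y: "y = x[p := \<not> x!p]" by blast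
  have "{i. i < n \<and> x ! i \<noteq> y ! i} = {p}" using p lx y by (auto simp: nth_list_update)
  then show "hc_adj n x y" using lx y by (simp add: hc_adj_def)
qed

lemma str_ge:
  assumes "hc_adj m u v" shows "fn m u + fn m v \<le> str_fn m"
proof -
  define L where "L = {x::bool list. set x \<subseteq> UNIV \<and> length x = m}"
  have fL: "finite L" unfolding L_def by (rule finite_lists_length_eq) simp
  have sub: "{fn m u + fn m v | u v. hc_adj m u v} \<subseteq> (\<lambda>p. fn m (fst p) + fn m (snd p)) ` (L \<times> L)"
  proof
    fix z assume "z \<in> {fn m u + fn m v | u v. hc_adj m u v}"
    then obtain u' v' where z: "z = fn m u' + fn m v'" and h: "hc_adj m u' v'" by blast
    have "length u' = m" "length v' = m" using h unfolding hc_adj_def by blast+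
    then have "(u', v') \<in> L \<times> L" unfolding L_def by blast
    then show "z \<in> (\<lambda>p. fn m (fst p) + fn m (snd p)) ` (L \<times> L)" using z by force
  qed
  have fin: "finite {fn m u + fn m v | u v. hc_adj m u v}"
    by (rule finite_subset[OF sub]) (use fL in blast)
  have mem: "fn m u + fn m v \<in> {fn m u + fn m v | u v. hc_adj m u v}" using assms by blast
  show ?thesis unfolding str_fn_def by (rule Max_ge[OF fin mem])
qed

lemma rk_repl: "rk (replicate k False) = 0"
  by (induction k) auto
lemma weight_repl: "weight (replicate k False) = 0"
  by (induction k) auto

lemma str_lower:
  assumes "odd (Suc q)" shows "2 ^ Suc q + 1 \<le> str_fn (Suc q)"
proof -
  have "fn (Suc q) (replicate (Suc q) False) + P q (Suc 0) = 2 ^ Suc q + 1"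
    using fn_base_even[of q "replicate (Suc q) False"] assms by (simp add: rk_repl weight_repl del: replicate_Suc)
  then have a: "fn (Suc q) (replicate (Suc q) False) = 2 ^ Suc q" by (simp add: P_Suc)
  have b: "1 \<le> fn (Suc q) (True # replicate q False)" by (simp add: fn_def)
  have "hc_adj (Suc q) (replicate (Suc q) False) (True # replicate q False)"
    unfolding hc_adj_iff by (intro conjI exI[of _ 0]) auto
  from str_ge[OF this] a b show ?thesis by simp
qed

lemma flip0_upd: "a \<noteq> [] \<Longrightarrow> flip0 (a[r := \<not> a!r]) = (flip0 a)[r := \<not> (flip0 a)!r]"
  by (cases a; cases r) (auto simp: flip0_def)

lemma length_flip0[simp]: "length (flip0 a) = length a"
  by (cases a) (auto simp: flip0_def)

lemma upd_flip_twice: "r < length a \<Longrightarrow> (a[r := \<not> a!r])[r := \<not> (a[r := \<not> a!r])!r] = a"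
  by (simp add: nth_list_update list_update_overwrite list_update_id)



theorem theorem2p5:
  fixes n :: nat and x y :: "bool list"
  assumes "n \<ge> 5" and "odd n"
    and "hc_adj n x y"
    and "fn n x + fn n y = str_fn n"
    and "hd x = True" and "hd y = True"
  shows "str_fn n \<le> str_fn (n - 2) + 3 * 2 ^ (n - 2)
           + ((n - 3) choose ((n - 3 + 1) div 2)) + ((n - 2) choose ((n - 2 + 1) div 2))"
proof -
  have nq: "n = Suc (Suc (Suc (n - 3)))" using assms(1) by simp
  define q where "q = n - 3"
  have q2: "2 \<le> q" using assms(1) q_def by simp
  note nq = nq[folded q_def]
  have oq: "odd (Suc q)" using assms(2) nq by simp
  define K where "K = 3 * 2 ^ Suc q + (q choose ((q+1) div 2)) + (Suc q choose ((Suc q+1) div 2))"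
  have goal: "str_fn n \<le> str_fn (Suc q) + K \<Longrightarrow> ?thesis" unfolding K_def nq by simp
  have lx: "length x = n" and "\<exists>p<n. y = x[p := \<not> x!p]" using assms(3) unfolding hc_adj_iff by auto
  then obtain p where p: "p < n" and y: "y = x[p := \<not> x!p]" by blast
  obtain c a where x: "x = True # c # a" and la: "length a = Suc q"
    using lx assms(5) nq by (cases x; cases "tl x") auto
  have main: "fn n x + fn n y \<le> str_fn (Suc q) + K"
  proof (cases p)
    case 0
    then show ?thesis using y x assms(6) by simp
  next
    case (Suc p')
    show ?thesis
    proof (cases p')
      case 0
      then have y': "y = True # (\<not>c) # a" using y x Suc by simp
      have "fn n x + fn n y \<le> 2 ^ Suc q + 1 + K"
      proof (cases c)
        case True then show ?thesis using corec[OF oq la] x y' nq unfolding K_def by simp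
      next
        case False then show ?thesis using corec[OF oq la] x y' nq unfolding K_def by simp
      qed
      then show ?thesis using str_lower[OF oq] by simp
    next
      case (Suc r)
      define b where "b = a[r := \<not> a!r]"
      have r: "r < Suc q" using p nq \<open>p = Suc p'\<close> Suc by simp
      have y': "y = True # c # b" using y x \<open>p = Suc p'\<close> Suc b_def by simp
      have lb: "length b = Suc q" using la b_def by simp
      have adj: "hc_adj (Suc q) a b" unfolding hc_adj_iff using la r b_def by blast
      have wr: "weight b = Suc (weight a) \<or> Suc (weight b) = weight a"
        using weight_upd_flip[of r a] r la b_def by (auto split: if_splits)
      have wr': "weight a = Suc (weight b) \<or> Suc (weight a) = weight b" using wr by auto
      show ?thesis
      proof (cases c)
        case True
        show ?thesis
        proof (cases "odd (weight a)")
          case True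
          have "fn n x + fn n y \<le> fn (Suc q) a + fn (Suc q) b + K"
            using core11[OF oq la lb True wr] x y' \<open>c\<close> nq unfolding K_def by simp
          then show ?thesis using str_ge[OF adj] by simp
        next
          case False
          have ob: "odd (weight b)" using wr False by (metis even_Suc)
          have "fn n x + fn n y \<le> fn (Suc q) a + fn (Suc q) b + K"
            using core11[OF oq lb la ob wr'] x y' \<open>c\<close> nq unfolding K_def by simp
          then show ?thesis using str_ge[OF adj] by simp
        qed
      next
        case False
        have ane: "a \<noteq> []" using la by auto
        have adj2: "hc_adj (Suc q) (flip0 a) (flip0 b)"
          unfolding hc_adj_iff using la r b_def flip0_upd[OF ane, of r] by auto
        show ?thesis
        proof (cases "even (weight a)")
          case True
          have "fn n x + fn n y \<le> fn (Suc q) (flip0 a) + fn (Suc q) (flip0 b) + K"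
            using core10[OF oq la lb True wr] x y' \<open>\<not> c\<close> nq unfolding K_def by simp
          then show ?thesis using str_ge[OF adj2] by simp
        next
          case False
          have eb: "even (weight b)" using wr False by (metis even_Suc)
          have "fn n x + fn n y \<le> fn (Suc q) (flip0 a) + fn (Suc q) (flip0 b) + K"
            using core10[OF oq lb la eb wr'] x y' \<open>\<not> c\<close> nq unfolding K_def by simp
          then show ?thesis using str_ge[OF adj2] by simp
        qed
      qed
    qed
  qed
  show ?thesis using main assms(4) goal by simp
qed

end
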